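(* Let $P$ be a generic regular hexagon in $\mathbb{R}^3$. For every support system $u_1,\ldots,u_6$ of $P$, the derived hexagon $P'$, with edge vectors $v'_1=u_2-u_1,\ v'_2=u_3-u_2,\ldots,\ v'_5=u_6-u_5,\ v'_6=u_1-u_6$ and determinants $\Delta'_i=(v'_i,[v'_{i+1},v'_{i+2}])$, satisfies $\Delta'_1=\Delta'_4$, $\Delta'_2=\Delta'_5$, $\Delta'_3=\Delta'_6$; hence every generic derivative of $P$ is strongly-regular. Moreover, all (generic) derivatives of $P$, over all support systems of $P$, have the same type.
   Context: Indices are cyclic mod $6$; $(\cdot,\cdot)$ and $[\cdot,\cdot]$ are the dot and cross products. For a closed hexagon $A_1\ldots A_6$ put $v_1=\overline{A_1A_2},\ldots,v_6=\overline{A_6A_1}$ and $\Delta_i=(v_i,[v_{i+1},v_{i+2}])$. The hexagon is generic if any two consecutive $v_i,v_{i+1}$ are not collinear and any three consecutive $v_i,v_{i+1},v_{i+2}$ are not coplanar. A support system is a tuple $u_1,\ldots,u_6$ with $[u_i,u_{i+1}]=v_{i+1}$ for all $i$; a generic hexagon is regular if it has a support system. The derived hexagon (derivative) for a support system is $B_1\ldots B_6$ with $\overline{OB_i}=u_i$ for a fixed origin $O$. A regular hexagon is strongly-regular if $\Delta_1=\Delta_4$, $\Delta_2=\Delta_5$, $\Delta_3=\Delta_6$; its type is the cyclic ratio $\Delta_1:\Delta_2:\Delta_3$, i.e. the triple $(\Delta_1,\Delta_2,\Delta_3)$ up to multiplication by a nonzero scalar and cyclic permutation. *)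

theory Defs
  imports "HOL-Analysis.Analysis" "HOL-Analysis.Cross3"
begin

text \<open>Hexagons in R^3 are given by vertex functions A :: nat => real^3; only
  A 0, ..., A 5 matter (0-based indexing, vertex A_{i+1} of the paper is A i),
  and all indices are read mod 6.\<close>

definition edge :: "(nat \<Rightarrow> real^3) \<Rightarrow> nat \<Rightarrow> real^3" where
  "edge A i = A (Suc i mod 6) - A (i mod 6)"

definition Delta :: "(nat \<Rightarrow> real^3) \<Rightarrow> nat \<Rightarrow> real" where
  "Delta A i = edge A i \<bullet> cross3 (edge A (i + 1)) (edge A (i + 2))"

definition generic_hex :: "(nat \<Rightarrow> real^3) \<Rightarrow> bool" where
  "generic_hex A \<longleftrightarrow>
     (\<forall>i. \<not> collinear {0, edge A i, edge A (i + 1)}) \<and>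
     (\<forall>i. \<not> coplanar {0, edge A i, edge A (i + 1), edge A (i + 2)})"

definition support_system :: "(nat \<Rightarrow> real^3) \<Rightarrow> (nat \<Rightarrow> real^3) \<Rightarrow> bool" where
  "support_system A u \<longleftrightarrow>
     (\<forall>i. cross3 (u (i mod 6)) (u (Suc i mod 6)) = edge A (Suc i))"

definition regular_hex :: "(nat \<Rightarrow> real^3) \<Rightarrow> bool" where
  "regular_hex A \<longleftrightarrow> generic_hex A \<and> (\<exists>u. support_system A u)"

text \<open>The derived hexagon for the support system u has vertices B_i = O + u_i;
  taking O = 0, it is the vertex function u itself.\<close>
definition derived_hex :: "(nat \<Rightarrow> real^3) \<Rightarrow> (nat \<Rightarrow> real^3)" where
  "derived_hex u = u"

definition strongly_regular :: "(nat \<Rightarrow> real^3) \<Rightarrow> bool" where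
  "strongly_regular A \<longleftrightarrow> regular_hex A \<and>
     Delta A 0 = Delta A 3 \<and> Delta A 1 = Delta A 4 \<and> Delta A 2 = Delta A 5"

definition hex_triple :: "(nat \<Rightarrow> real^3) \<Rightarrow> real \<times> real \<times> real" where
  "hex_triple A = (Delta A 0, Delta A 1, Delta A 2)"

definition same_type :: "real \<times> real \<times> real \<Rightarrow> real \<times> real \<times> real \<Rightarrow> bool" where
  "same_type t s \<longleftrightarrow> (case t of (a1, a2, a3) \<Rightarrow> case s of (b1, b2, b3) \<Rightarrow>
     (\<exists>c. c \<noteq> 0 \<and>
        ((b1, b2, b3) = (c * a1, c * a2, c * a3) \<or>
         (b1, b2, b3) = (c * a2, c * a3, c * a1) \<or>
         (b1, b2, b3) = (c * a3, c * a1, c * a2))))"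

end

theory Submission
  imports Defs
begin


lemma L_fin2:
  fixes x y :: "real^3" and a b :: real
  assumes "a *\<^sub>R x = b *\<^sub>R y" and "a \<noteq> 0"
  shows "x = (b / a) *\<^sub>R y"
proof -
  have "x = (1/a) *\<^sub>R (a *\<^sub>R x)" using assms(2) by simp
  also have "\<dots> = (b / a) *\<^sub>R y" using assms(1) by simp
  finally show ?thesis .
qed
lemma L_fin1:
  fixes x y :: "real^3" and a :: real
  assumes "a *\<^sub>R x = y" and "a \<noteq> 0"
  shows "x = (1 / a) *\<^sub>R y"
proof -
  have "x = (1/a) *\<^sub>R (a *\<^sub>R x)" using assms(2) by simp
  also have "\<dots> = (1 / a) *\<^sub>R y" using assms(1) by simp
  finally show ?thesis .
qed

lemma in_ah3: "x = u *\<^sub>R a + v *\<^sub>R b + w *\<^sub>R c \<Longrightarrow> u + v + w = 1 \<Longrightarrow> x \<in> affine hull {a,b,c}"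
  for x a b c :: "real^3"
  unfolding affine_hull_3 by blast


lemma L_scale:
  fixes a b c d :: "real^3"
  assumes "s * t = 1"
  shows "(t *\<^sub>R b - s *\<^sub>R a) \<bullet> cross3 (s *\<^sub>R c - t *\<^sub>R b) (t *\<^sub>R d - s *\<^sub>R c)
     = t * (b \<bullet> cross3 (c - a) d) - s * (a \<bullet> cross3 c (d - b))"
  using assms
  by (simp add: cross3_def inner_vec_def sum_3 vector_def; algebra)

lemma L_unit:
  fixes a b c d :: "real^3"
  shows "(b - a) \<bullet> cross3 (c - b) (d - c)
     = (b \<bullet> cross3 (c - a) d) - (a \<bullet> cross3 c (d - b))"
  by (simp add: cross3_def inner_vec_def sum_3 vector_def algebra_simps)

lemma L_cc:
  fixes a b c :: "real^3"
  shows "cross3 (cross3 a b) (cross3 b c) = (a \<bullet> cross3 b c) *\<^sub>R b"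
  by (simp add: cross3_def inner_vec_def sum_3 vector_def vec_eq_iff forall_3 algebra_simps)

lemma L_gram:
  fixes a b c :: "real^3"
  shows "((cross3 b c) \<bullet> (cross3 b c)) *\<^sub>R a
     = ((a \<bullet> b) * (c \<bullet> c) - (a \<bullet> c) * (b \<bullet> c)) *\<^sub>R b
     + ((a \<bullet> c) * (b \<bullet> b) - (a \<bullet> b) * (b \<bullet> c)) *\<^sub>R c
     + (a \<bullet> cross3 b c) *\<^sub>R cross3 b c"
  by (simp add: cross3_def inner_vec_def sum_3 vector_def vec_eq_iff forall_3 algebra_simps)

lemma L_par0:
  fixes x p q :: "real^3"
  assumes "x \<bullet> p = 0" "x \<bullet> q = 0"
  shows "((cross3 p q) \<bullet> (cross3 p q)) *\<^sub>R x = (x \<bullet> cross3 p q) *\<^sub>R cross3 p q"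
  using L_gram[where a=x and b=p and c=q] assms by (simp add: inner_commute)


lemma L_par:
  fixes x y p q :: "real^3"
  assumes "x \<bullet> p = 0" "x \<bullet> q = 0" "y \<bullet> p = 0" "y \<bullet> q = 0"
    and n: "cross3 p q \<noteq> 0" and y: "y \<noteq> 0"
  shows "\<exists>r. x = r *\<^sub>R y"
proof -
  let ?n = "cross3 p q"
  have N: "?n \<bullet> ?n \<noteq> 0" using n by simp
  have hx: "(?n \<bullet> ?n) *\<^sub>R x = (x \<bullet> ?n) *\<^sub>R ?n" using L_par0 assms by blast
  have hy: "(?n \<bullet> ?n) *\<^sub>R y = (y \<bullet> ?n) *\<^sub>R ?n" using L_par0 assms by blast
  have yn: "y \<bullet> ?n \<noteq> 0"
  proof
    assume "y \<bullet> ?n = 0"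
    then have "(?n \<bullet> ?n) *\<^sub>R y = 0" using hy by simp
    then show False using N y by simp
  qed
  have "(y \<bullet> ?n) *\<^sub>R ((?n \<bullet> ?n) *\<^sub>R x) = (x \<bullet> ?n) *\<^sub>R ((?n \<bullet> ?n) *\<^sub>R y)"
    using hx hy by simp
  then have "(?n \<bullet> ?n) *\<^sub>R ((y \<bullet> ?n) *\<^sub>R x) = (?n \<bullet> ?n) *\<^sub>R ((x \<bullet> ?n) *\<^sub>R y)"
    by (simp add: algebra_simps)
  then have "(y \<bullet> ?n) *\<^sub>R x = (x \<bullet> ?n) *\<^sub>R y" using N scaleR_cancel_left by blast
  then have "x = ((x \<bullet> ?n) / (y \<bullet> ?n)) *\<^sub>R y" using yn by (rule L_fin2)
  then show ?thesis by blast
qed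

lemma L_det0:
  fixes a b c :: "real^3"
  assumes "a \<bullet> cross3 b c = 0"
  shows "coplanar {0, a, b, c}"
proof (cases "cross3 b c = 0")
  case False
  let ?N = "cross3 b c \<bullet> cross3 b c"
  have N: "?N \<noteq> 0" using False by simp
  obtain al be where e: "?N *\<^sub>R a = al *\<^sub>R b + be *\<^sub>R c"
    using L_gram[where a=a and b=b and c=c] assms by auto
  have "a = (1 / ?N) *\<^sub>R (al *\<^sub>R b + be *\<^sub>R c)"
    using L_fin1[OF e N] .
  then have "a = (1 - al/?N - be/?N) *\<^sub>R 0 + (al / ?N) *\<^sub>R b + (be / ?N) *\<^sub>R c"
    by (simp add: scaleR_add_right)
  then have "a \<in> affine hull {0, b, c}" by (rule in_ah3) simp
  moreover have "{0, b, c} \<subseteq> affine hull {0, b, c}" by (rule hull_subset)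
  ultimately have "{0, a, b, c} \<subseteq> affine hull {0, b, c}" by blast
  then show ?thesis unfolding coplanar_def by blast
next
  case True
  then have "collinear {0, b, c}" by (simp add: cross_eq_0)
  then have "b = 0 \<or> c = 0 \<or> (\<exists>k. c = k *\<^sub>R b)" by (simp add: collinear_lemma)
  moreover have "{0, a, b} \<subseteq> affine hull {0, a, b}" by (rule hull_subset)
  moreover have "{0, a, c} \<subseteq> affine hull {0, a, c}" by (rule hull_subset)
  moreover have "c \<in> affine hull {0, a, b}" if "c = k *\<^sub>R b" for k
    by (rule in_ah3[where u="1-k" and v=0 and w=k]) (simp_all add: that)
  ultimately have "{0, a, b, c} \<subseteq> affine hull {0, a, b} \<or> {0, a, b, c} \<subseteq> affine hull {0, a, c}"
    by blast
  then show ?thesis unfolding coplanar_def by blast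
qed


lemma part1_id:
  fixes a b c d e f :: "real^3"
  shows "(b - a) \<bullet> cross3 (c - b) (d - c) - (e - d) \<bullet> cross3 (f - e) (a - f)
     = (d - a) \<bullet> (cross3 a b + cross3 b c + cross3 c d + cross3 d e + cross3 e f + cross3 f a)"
  by (simp add: cross3_def inner_vec_def sum_3 vector_def algebra_simps)

lemma P1:
  fixes a b c d e f :: "real^3"
  assumes "cross3 a b + cross3 b c + cross3 c d + cross3 d e + cross3 e f + cross3 f a = 0"
  shows "(b - a) \<bullet> cross3 (c - b) (d - c) = (e - d) \<bullet> cross3 (f - e) (a - f)"
  using part1_id[of b a c d e f] assms by simp

lemma K_id:
  fixes a b c d e :: "real^3"
  shows "(b \<bullet> cross3 (c - a) d) * (c \<bullet> cross3 (d - b) e) - (a \<bullet> cross3 c (d - b)) * (b \<bullet> cross3 d (e - c))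
     = (b \<bullet> cross3 c d) * ((cross3 a b + cross3 b c + cross3 c d + cross3 d e) \<bullet> (e - a))"
  unfolding inner_vec_def sum_3 by (simp add: cross3_def vector_def inner_vec_def sum_3 ; algebra)

lemma K_aux:
  fixes a e f :: "real^3"
  shows "(cross3 e f + cross3 f a) \<bullet> (e - a) = 0"
  by (simp add: cross3_def vector_def inner_vec_def sum_3 algebra_simps)

lemma K:
  fixes a b c d e f :: "real^3"
  assumes "cross3 a b + cross3 b c + cross3 c d + cross3 d e + cross3 e f + cross3 f a = 0"
  shows "(b \<bullet> cross3 (c - a) d) * (c \<bullet> cross3 (d - b) e) = (a \<bullet> cross3 c (d - b)) * (b \<bullet> cross3 d (e - c))"
proof -
  have "cross3 a b + cross3 b c + cross3 c d + cross3 d e = - (cross3 e f + cross3 f a)"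
    using assms by (simp add: algebra_simps eq_neg_iff_add_eq_0)
  then have "(cross3 a b + cross3 b c + cross3 c d + cross3 d e) \<bullet> (e - a)
      = (- (cross3 e f + cross3 f a)) \<bullet> (e - a)" by (simp only:)
  also have "\<dots> = - ((cross3 e f + cross3 f a) \<bullet> (e - a))" by (rule inner_minus_left)
  also have "\<dots> = 0" using K_aux[of e f a] by simp
  finally have "(cross3 a b + cross3 b c + cross3 c d + cross3 d e) \<bullet> (e - a) = 0" .
  then show ?thesis using K_id[where a=a and b=b and c=c and d=d and e=e] by simp
qed

lemma sucs: "Suc 0 = 1" "Suc 1 = 2" "Suc 2 = 3" "Suc 3 = 4" "Suc 4 = 5" "Suc 5 = 6" "Suc 6 = 7" "Suc 7 = 8"
proof -
  show "Suc 0 = 1" by simp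
  show "Suc 1 = 2" by (simp add: numeral_2_eq_2)
  show "Suc 2 = 3" by simp
  show "Suc 3 = 4" by simp
  show "Suc 4 = 5" by simp
  show "Suc 5 = 6" by simp
  show "Suc 6 = 7" by simp
  show "Suc 7 = 8" by simp
qed

lemma idm: "(0::nat) mod 6 = 0" "(1::nat) mod 6 = 1" "(2::nat) mod 6 = 2" "(3::nat) mod 6 = 3"
  "(4::nat) mod 6 = 4" "(5::nat) mod 6 = 5" "(6::nat) mod 6 = 0" "(7::nat) mod 6 = 1" "(8::nat) mod 6 = 2"
  by simp_all

lemma adds: "(0::nat) + 1 = 1" "(0::nat) + 2 = 2" "(1::nat) + 1 = 2" "(1::nat) + 2 = 3"
  "(2::nat) + 1 = 3" "(2::nat) + 2 = 4" "(3::nat) + 1 = 4" "(3::nat) + 2 = 5"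
  "(4::nat) + 1 = 5" "(4::nat) + 2 = 6" "(5::nat) + 1 = 6" "(5::nat) + 2 = 7"
  by simp_all

lemma edges:
  "edge A 0 = A 1 - A 0"
  "edge A 1 = A 2 - A 1"
  "edge A 2 = A 3 - A 2"
  "edge A 3 = A 4 - A 3"
  "edge A 4 = A 5 - A 4"
  "edge A 5 = A 0 - A 5"
  "edge A 6 = A 1 - A 0"
  "edge A 7 = A 2 - A 1"
  by (simp only: edge_def sucs idm)+

lemma edge_mod: "edge A i = edge A (i mod 6)"
proof -
  have "Suc (i mod 6) mod 6 = Suc i mod 6" by (rule mod_Suc_eq)
  then show ?thesis unfolding edge_def by simp
qed

lemma gen_facts:
  assumes "generic_hex A"
  shows "edge A i \<noteq> 0" "cross3 (edge A i) (edge A (Suc i)) \<noteq> 0"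
proof -
  have nc: "\<not> collinear {0, edge A i, edge A (Suc i)}" using assms unfolding generic_hex_def by simp
  then show "cross3 (edge A i) (edge A (Suc i)) \<noteq> 0" by (simp add: cross_eq_0)
  show "edge A i \<noteq> 0"
  proof
    assume "edge A i = 0"
    then have "collinear {0, edge A i, edge A (Suc i)}" by simp
    then show False using nc by simp
  qed
qed

lemma gen_Delta:
  assumes "generic_hex A"
  shows "Delta A i \<noteq> 0"
proof
  assume "Delta A i = 0"
  then have "coplanar {0, edge A i, edge A (i+1), edge A (i+2)}"
    unfolding Delta_def by (rule L_det0)
  then show False using assms unfolding generic_hex_def by blast
qed

lemma ss_k:
  assumes "support_system A u" "k < 6"
  shows "cross3 (u k) (u (Suc k mod 6)) = edge A (Suc k)"
    "cross3 (u ((k+5) mod 6)) (u k) = edge A k"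
proof -
  show "cross3 (u k) (u (Suc k mod 6)) = edge A (Suc k)"
  proof -
    have km: "k mod 6 = k" using assms(2) by simp
    have "cross3 (u (k mod 6)) (u (Suc k mod 6)) = edge A (Suc k)"
      using assms(1) unfolding support_system_def by blast
    then show ?thesis unfolding km .
  qed
  have "cross3 (u ((k+5) mod 6)) (u (Suc (k+5) mod 6)) = edge A (Suc (k+5))"
    using assms unfolding support_system_def by blast
  moreover have m: "Suc (k+5) mod 6 = k" using assms by simp
  moreover have "edge A (Suc (k+5)) = edge A k"
  proof -
    have "edge A (Suc (k+5)) = edge A (Suc (k+5) mod 6)" by (rule edge_mod)
    then show ?thesis unfolding m .
  qed
  ultimately show "cross3 (u ((k+5) mod 6)) (u k) = edge A k" by simp
qed

lemma ss_closure:
  assumes "support_system A u"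
  shows "cross3 (u 0) (u 1) + cross3 (u 1) (u 2) + cross3 (u 2) (u 3) + cross3 (u 3) (u 4)
     + cross3 (u 4) (u 5) + cross3 (u 5) (u 0) = 0"
proof -
  have h: "\<And>i. cross3 (u (i mod 6)) (u (Suc i mod 6)) = edge A (Suc i)"
    using assms unfolding support_system_def by blast
  note h0 = h[of 0, unfolded sucs idm edges]
  note h1 = h[of 1, unfolded sucs idm edges]
  note h2 = h[of 2, unfolded sucs idm edges]
  note h3 = h[of 3, unfolded sucs idm edges]
  note h4 = h[of 4, unfolded sucs idm edges]
  note h5 = h[of 5, unfolded sucs idm edges]
  show ?thesis unfolding h0 h1 h2 h3 h4 h5 by simp
qed

lemma Delta_u:
  "Delta u 0 = (u 1 - u 0) \<bullet> cross3 (u 2 - u 1) (u 3 - u 2)"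
  "Delta u 1 = (u 2 - u 1) \<bullet> cross3 (u 3 - u 2) (u 4 - u 3)"
  "Delta u 2 = (u 3 - u 2) \<bullet> cross3 (u 4 - u 3) (u 5 - u 4)"
  "Delta u 3 = (u 4 - u 3) \<bullet> cross3 (u 5 - u 4) (u 0 - u 5)"
  "Delta u 4 = (u 5 - u 4) \<bullet> cross3 (u 0 - u 5) (u 1 - u 0)"
  "Delta u 5 = (u 0 - u 5) \<bullet> cross3 (u 1 - u 0) (u 2 - u 1)"
  by (simp only: Delta_def adds edges)+

lemma part1:
  assumes "support_system A u"
  shows "Delta u 0 = Delta u 3 \<and> Delta u 1 = Delta u 4 \<and> Delta u 2 = Delta u 5"
proof -
  note S = ss_closure[OF assms]
  have S1: "cross3 (u 1) (u 2) + cross3 (u 2) (u 3) + cross3 (u 3) (u 4) + cross3 (u 4) (u 5)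
     + cross3 (u 5) (u 0) + cross3 (u 0) (u 1) = 0" using S by (simp add: add_ac)
  have S2: "cross3 (u 2) (u 3) + cross3 (u 3) (u 4) + cross3 (u 4) (u 5)
     + cross3 (u 5) (u 0) + cross3 (u 0) (u 1) + cross3 (u 1) (u 2) = 0" using S by (simp add: add_ac)
  show ?thesis unfolding Delta_u using P1[OF S] P1[OF S1] P1[OF S2] by simp
qed




lemma ss_par:
  assumes su: "support_system A u" and sw: "support_system A w" and g: "generic_hex A" and k: "k < 6"
  shows "\<exists>r. w k = r *\<^sub>R u k"
proof -
  have u1: "cross3 (u k) (u (Suc k mod 6)) = edge A (Suc k)" using ss_k[OF su k] by blast
  have u2: "cross3 (u ((k+5) mod 6)) (u k) = edge A k" using ss_k[OF su k] by blast
  have w1: "cross3 (w k) (w (Suc k mod 6)) = edge A (Suc k)" using ss_k[OF sw k] by blast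
  have w2: "cross3 (w ((k+5) mod 6)) (w k) = edge A k" using ss_k[OF sw k] by blast
  have o1: "u k \<bullet> edge A k = 0" unfolding u2[symmetric] by (simp add: dot_cross_self)
  have o2: "u k \<bullet> edge A (Suc k) = 0" unfolding u1[symmetric] by (simp add: dot_cross_self)
  have o3: "w k \<bullet> edge A k = 0" unfolding w2[symmetric] by (simp add: dot_cross_self)
  have o4: "w k \<bullet> edge A (Suc k) = 0" unfolding w1[symmetric] by (simp add: dot_cross_self)
  have nz: "u k \<noteq> 0"
  proof
    assume "u k = 0"
    then have "edge A (Suc k) = 0" using u1 by simp
    then show False using gen_facts(1)[OF g, of "Suc k"] by simp
  qed
  show ?thesis by (rule L_par[OF o3 o4 o1 o2 gen_facts(2)[OF g] nz])
qed

lemma ss_prod: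
  assumes su: "support_system A u" and sw: "support_system A w" and g: "generic_hex A" and k: "k < 6"
    and h1: "w k = r *\<^sub>R u k" and h2: "w (Suc k mod 6) = r' *\<^sub>R u (Suc k mod 6)"
  shows "r * r' = 1"
proof -
  have u1: "cross3 (u k) (u (Suc k mod 6)) = edge A (Suc k)" using ss_k[OF su k] by blast
  have w1: "cross3 (w k) (w (Suc k mod 6)) = edge A (Suc k)" using ss_k[OF sw k] by blast
  have "(r' * r) *\<^sub>R edge A (Suc k) = edge A (Suc k)"
    using u1 w1 h1 h2 by (simp add: cross_mult_left cross_mult_right)
  then have "(r' * r - 1) *\<^sub>R edge A (Suc k) = 0" by (simp add: algebra_simps)
  then have "r' * r = 1" using gen_facts(1)[OF g, of "Suc k"] by simp
  then show ?thesis by (simp add: mult.commute)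
qed

lemma inv_chain: "a * b = 1 \<Longrightarrow> b * c = 1 \<Longrightarrow> c = (a::real)"
proof -
  assume h1: "a * b = 1" and h2: "b * c = 1"
  have "c = c * (a * b)" using h1 by simp
  also have "\<dots> = a * (b * c)" by (simp add: algebra_simps)
  also have "\<dots> = a" using h2 by simp
  finally show "c = a" .
qed

lemma part3:
  assumes g: "generic_hex A" and su: "support_system A u" and sw: "support_system A w"
    and gu: "generic_hex u" and gw: "generic_hex w"
  shows "same_type (hex_triple u) (hex_triple w)"
proof -
  obtain r0 where r0: "w 0 = r0 *\<^sub>R u 0" using ss_par[OF su sw g, of 0] by auto
  obtain r1 where r1: "w 1 = r1 *\<^sub>R u 1" using ss_par[OF su sw g, of 1] by auto
  obtain r2 where r2: "w 2 = r2 *\<^sub>R u 2" using ss_par[OF su sw g, of 2] by auto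
  obtain r3 where r3: "w 3 = r3 *\<^sub>R u 3" using ss_par[OF su sw g, of 3] by auto
  obtain r4 where r4: "w 4 = r4 *\<^sub>R u 4" using ss_par[OF su sw g, of 4] by auto
  obtain r5 where r5: "w 5 = r5 *\<^sub>R u 5" using ss_par[OF su sw g, of 5] by auto
  have p01: "r0 * r1 = 1" by (rule ss_prod[OF su sw g, of 0 r0 r1, unfolded sucs idm, OF _ r0 r1]) simp
  have p12: "r1 * r2 = 1" by (rule ss_prod[OF su sw g, of 1 r1 r2, unfolded sucs idm, OF _ r1 r2]) simp
  have p23: "r2 * r3 = 1" by (rule ss_prod[OF su sw g, of 2 r2 r3, unfolded sucs idm, OF _ r2 r3]) simp
  have p34: "r3 * r4 = 1" by (rule ss_prod[OF su sw g, of 3 r3 r4, unfolded sucs idm, OF _ r3 r4]) simp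
  have p45: "r4 * r5 = 1" by (rule ss_prod[OF su sw g, of 4 r4 r5, unfolded sucs idm, OF _ r4 r5]) simp
  have e2: "r2 = r0" using inv_chain[OF p01 p12] .
  have e3: "r3 = r1" using inv_chain[OF p12 p23] .
  have e4: "r4 = r0" using inv_chain[OF p23 p34] e2 by simp
  have e5: "r5 = r1" using inv_chain[OF p34 p45] e3 by simp
  define s where "s = r0"
  define t where "t = r1"
  have st: "s * t = 1" using p01 by (simp add: s_def t_def)
  have ts: "t * s = 1" using st by (simp add: mult.commute)
  have W: "w 0 = s *\<^sub>R u 0" "w 1 = t *\<^sub>R u 1" "w 2 = s *\<^sub>R u 2" "w 3 = t *\<^sub>R u 3"
    "w 4 = s *\<^sub>R u 4" "w 5 = t *\<^sub>R u 5"
    using r0 r1 r2 r3 r4 r5 e2 e3 e4 e5 by (simp_all add: s_def t_def)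
  define P0 where "P0 = u 1 \<bullet> cross3 (u 2 - u 0) (u 3)"
  define N0 where "N0 = u 0 \<bullet> cross3 (u 2) (u 3 - u 1)"
  define P1 where "P1 = u 2 \<bullet> cross3 (u 3 - u 1) (u 4)"
  define N1 where "N1 = u 1 \<bullet> cross3 (u 3) (u 4 - u 2)"
  define P2 where "P2 = u 3 \<bullet> cross3 (u 4 - u 2) (u 5)"
  define N2 where "N2 = u 2 \<bullet> cross3 (u 4) (u 5 - u 3)"
  have a0: "Delta u 0 = P0 - N0" unfolding Delta_u P0_def N0_def by (rule L_unit)
  have a1: "Delta u 1 = P1 - N1" unfolding Delta_u P1_def N1_def by (rule L_unit)
  have a2: "Delta u 2 = P2 - N2" unfolding Delta_u P2_def N2_def by (rule L_unit)
  have b0: "Delta w 0 = t * P0 - s * N0" unfolding Delta_u W P0_def N0_def by (rule L_scale[OF st])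
  have b1: "Delta w 1 = s * P1 - t * N1" unfolding Delta_u W P1_def N1_def by (rule L_scale[OF ts])
  have b2: "Delta w 2 = t * P2 - s * N2" unfolding Delta_u W P2_def N2_def by (rule L_scale[OF st])
  note S = ss_closure[OF su]
  have S1: "cross3 (u 1) (u 2) + cross3 (u 2) (u 3) + cross3 (u 3) (u 4) + cross3 (u 4) (u 5)
     + cross3 (u 5) (u 0) + cross3 (u 0) (u 1) = 0" using S by (simp add: add_ac)
  have k1: "P0 * P1 = N0 * N1" unfolding P0_def P1_def N0_def N1_def by (rule K[OF S])
  have k2: "P1 * P2 = N1 * N2" unfolding P1_def P2_def N1_def N2_def by (rule K[OF S1])
  have nzu: "Delta u 1 \<noteq> 0" by (rule gen_Delta[OF gu])
  have nzw: "Delta w 1 \<noteq> 0" by (rule gen_Delta[OF gw])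
  have q1: "Delta w 1 * Delta u 0 - Delta w 0 * Delta u 1 = (s - t) * (P0 * P1 - N0 * N1)"
    unfolding a0 a1 b0 b1 by (simp add: algebra_simps)
  have q2: "Delta w 2 * Delta u 1 - Delta w 1 * Delta u 2 = (t - s) * (P1 * P2 - N1 * N2)"
    unfolding a1 a2 b1 b2 by (simp add: algebra_simps)
  define c where "c = Delta w 1 / Delta u 1"
  have cnz: "c \<noteq> 0" using nzu nzw by (simp add: c_def)
  have c0: "Delta w 0 = c * Delta u 0"
  proof -
    have "Delta w 1 * Delta u 0 = Delta w 0 * Delta u 1" using q1 k1 by simp
    then show ?thesis using nzu unfolding c_def by (simp add: field_simps)
  qed
  have c1: "Delta w 1 = c * Delta u 1" using nzu unfolding c_def by simp
  have c2: "Delta w 2 = c * Delta u 2"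
  proof -
    have "Delta w 2 * Delta u 1 = Delta w 1 * Delta u 2" using q2 k2 by simp
    then show ?thesis using nzu unfolding c_def by (simp add: field_simps)
  qed
  show ?thesis unfolding same_type_def hex_triple_def using cnz c0 c1 c2 by auto
qed

definition Wsys :: "(nat \<Rightarrow> real^3) \<Rightarrow> nat \<Rightarrow> real^3" where
  "Wsys u i = (let k = i mod 6; D0 = Delta u 0; D1 = Delta u 1; D2 = Delta u 2;
     m = (if k = 0 then 1 else if k = 1 then 1/D0 else if k = 2 then D0/D1
          else if k = 3 then D1/(D0*D2) else if k = 4 then D2/D1 else 1/D2)
   in m *\<^sub>R cross3 (edge u k) (edge u (Suc k)))"

lemma Wsys_k:
  assumes g: "generic_hex u" and d: "Delta u 0 = Delta u 3" "Delta u 1 = Delta u 4" "Delta u 2 = Delta u 5"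
    and k: "k < 6"
  shows "cross3 (Wsys u k) (Wsys u (Suc k mod 6)) = edge u (Suc k)"
proof -
  have n0: "Delta u 0 \<noteq> 0" and n1: "Delta u 1 \<noteq> 0" and n2: "Delta u 2 \<noteq> 0"
    using gen_Delta[OF g] by auto
  have e6: "edge u 6 = edge u 0" using edge_mod[of u 6] by simp
  have e7: "edge u 7 = edge u 1" using edge_mod[of u 7] by simp
  have f0: "edge u 0 \<bullet> cross3 (edge u 1) (edge u 2) = Delta u 0"
    unfolding Delta_def adds by (rule refl)
  have f1: "edge u 1 \<bullet> cross3 (edge u 2) (edge u 3) = Delta u 1"
    unfolding Delta_def adds by (rule refl)
  have f2: "edge u 2 \<bullet> cross3 (edge u 3) (edge u 4) = Delta u 2"
    unfolding Delta_def adds by (rule refl)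
  have f3': "edge u 3 \<bullet> cross3 (edge u 4) (edge u 5) = Delta u 3"
    unfolding Delta_def adds by (rule refl)
  have f4': "edge u 4 \<bullet> cross3 (edge u 5) (edge u 0) = Delta u 4"
    unfolding Delta_def adds e6 by (rule refl)
  have f5': "edge u 5 \<bullet> cross3 (edge u 0) (edge u 1) = Delta u 5"
    unfolding Delta_def adds e6 e7 by (rule refl)
  have f3: "edge u 3 \<bullet> cross3 (edge u 4) (edge u 5) = Delta u 0" using f3' d(1) by simp
  have f4: "edge u 4 \<bullet> cross3 (edge u 5) (edge u 0) = Delta u 1" using f4' d(2) by simp
  have f5: "edge u 5 \<bullet> cross3 (edge u 0) (edge u 1) = Delta u 2" using f5' d(3) by simp
  have W0: "Wsys u 0 = cross3 (edge u 0) (edge u 1)"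
    unfolding Wsys_def Let_def idm sucs by simp
  have W1: "Wsys u 1 = (1 / Delta u 0) *\<^sub>R cross3 (edge u 1) (edge u 2)"
    unfolding Wsys_def Let_def idm sucs by simp
  have W2: "Wsys u 2 = (Delta u 0 / Delta u 1) *\<^sub>R cross3 (edge u 2) (edge u 3)"
    unfolding Wsys_def Let_def idm sucs by simp
  have W3: "Wsys u 3 = (Delta u 1 / (Delta u 0 * Delta u 2)) *\<^sub>R cross3 (edge u 3) (edge u 4)"
    unfolding Wsys_def Let_def idm sucs by simp
  have W4: "Wsys u 4 = (Delta u 2 / Delta u 1) *\<^sub>R cross3 (edge u 4) (edge u 5)"
    unfolding Wsys_def Let_def idm sucs by simp
  have W5: "Wsys u 5 = (1 / Delta u 2) *\<^sub>R cross3 (edge u 5) (edge u 0)"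
    unfolding Wsys_def Let_def idm sucs e6 by simp
  have c0: "cross3 (Wsys u 0) (Wsys u (Suc 0 mod 6)) = edge u (Suc 0)"
    unfolding sucs idm W0 W1 using n0 f0 by (simp add: cross_mult_left cross_mult_right L_cc)
  have c1: "cross3 (Wsys u 1) (Wsys u (Suc 1 mod 6)) = edge u (Suc 1)"
    unfolding sucs idm W1 W2 using n0 n1 f1 by (simp add: cross_mult_left cross_mult_right L_cc)
  have c2: "cross3 (Wsys u 2) (Wsys u (Suc 2 mod 6)) = edge u (Suc 2)"
    unfolding sucs idm W2 W3 using n0 n1 n2 f2 by (simp add: cross_mult_left cross_mult_right L_cc)
  have c3: "cross3 (Wsys u 3) (Wsys u (Suc 3 mod 6)) = edge u (Suc 3)"
    unfolding sucs idm W3 W4 using n0 n1 n2 f3 by (simp add: cross_mult_left cross_mult_right L_cc)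
  have c4: "cross3 (Wsys u 4) (Wsys u (Suc 4 mod 6)) = edge u (Suc 4)"
    unfolding sucs idm W4 W5 using n0 n1 n2 f4 by (simp add: cross_mult_left cross_mult_right L_cc)
  have c5: "cross3 (Wsys u 5) (Wsys u (Suc 5 mod 6)) = edge u (Suc 5)"
    unfolding sucs idm W5 W0 e6 using n0 n1 n2 f5 by (simp add: cross_mult_left cross_mult_right L_cc)
  have "k = 0 \<or> k = 1 \<or> k = 2 \<or> k = 3 \<or> k = 4 \<or> k = 5" using k by auto
  then show ?thesis using c0 c1 c2 c3 c4 c5 by (elim disjE) simp_all
qed

lemma Wsys_ss:
  assumes g: "generic_hex u" and d: "Delta u 0 = Delta u 3" "Delta u 1 = Delta u 4" "Delta u 2 = Delta u 5"
  shows "support_system u (Wsys u)"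
  unfolding support_system_def
proof
  fix i :: nat
  let ?k = "i mod 6"
  have k: "?k < 6" by simp
  have "Suc i mod 6 = Suc ?k mod 6" by (simp add: mod_Suc_eq)
  moreover have "edge u (Suc i) = edge u (Suc ?k)"
  proof -
    have "edge u (Suc i) = edge u (Suc i mod 6)" by (rule edge_mod)
    also have "\<dots> = edge u (Suc ?k mod 6)" unfolding \<open>Suc i mod 6 = Suc ?k mod 6\<close> ..
    also have "\<dots> = edge u (Suc ?k)" by (rule edge_mod[symmetric])
    finally show ?thesis .
  qed
  ultimately show "cross3 (Wsys u ?k) (Wsys u (Suc i mod 6)) = edge u (Suc i)"
    using Wsys_k[OF g d k] by simp
qed

theorem theorem5p1:
  fixes A :: "nat \<Rightarrow> real^3"
  assumes "regular_hex A"
  shows "(\<forall>u. support_system A u \<longrightarrow>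
            Delta (derived_hex u) 0 = Delta (derived_hex u) 3 \<and>
            Delta (derived_hex u) 1 = Delta (derived_hex u) 4 \<and>
            Delta (derived_hex u) 2 = Delta (derived_hex u) 5)
       \<and> (\<forall>u. support_system A u \<and> generic_hex (derived_hex u) \<longrightarrow>
            strongly_regular (derived_hex u))
       \<and> (\<forall>u w. support_system A u \<and> generic_hex (derived_hex u) \<and>
                support_system A w \<and> generic_hex (derived_hex w) \<longrightarrow>
            same_type (hex_triple (derived_hex u)) (hex_triple (derived_hex w)))"
proof -
  have g: "generic_hex A" using assms unfolding regular_hex_def by blast
  have A1: "\<forall>u. support_system A u \<longrightarrow>
            Delta (derived_hex u) 0 = Delta (derived_hex u) 3 \<and>
            Delta (derived_hex u) 1 = Delta (derived_hex u) 4 \<and>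
            Delta (derived_hex u) 2 = Delta (derived_hex u) 5"
    unfolding derived_hex_def using part1 by blast
  have A2: "\<forall>u. support_system A u \<and> generic_hex (derived_hex u) \<longrightarrow>
            strongly_regular (derived_hex u)"
  proof (intro allI impI)
    fix u assume h: "support_system A u \<and> generic_hex (derived_hex u)"
    then have su: "support_system A u" and gu: "generic_hex u" by (auto simp: derived_hex_def)
    have d: "Delta u 0 = Delta u 3" "Delta u 1 = Delta u 4" "Delta u 2 = Delta u 5"
      using part1[OF su] by auto
    have "support_system u (Wsys u)" by (rule Wsys_ss[OF gu d])
    then show "strongly_regular (derived_hex u)"
      unfolding derived_hex_def strongly_regular_def regular_hex_def using gu d by blast
  qed
  have A3: "\<forall>u w. support_system A u \<and> generic_hex (derived_hex u) \<and>
                support_system A w \<and> generic_hex (derived_hex w) \<longrightarrow>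
            same_type (hex_triple (derived_hex u)) (hex_triple (derived_hex w))"
    unfolding derived_hex_def using part3[OF g] by blast
  show ?thesis using A1 A2 A3 by blast
qed

end
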